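(* Let $q \geq 5$ be a prime power and let $\mathcal{X}$ be a plane curve of degree $q-1$ defined over $\mathbb{F}_q$ without $\mathbb{F}_q$-linear components with $\mathrm{N}_q(\mathcal{X}) = (q-1)^2$. If $P \in \mathcal{X}(\mathbb{F}_q)$, then $\psi_{q-1}(P) \geq 3$. In particular $a_{q-1} \geq 3(q-1)$. Moreover, if $\psi_{q-1}(P) = 3$, then among the $q+1$ lines of $\mathbb{P}^2(\mathbb{F}_q)$ through $P$, exactly $3$ contain $q-1$ points of $\mathcal{X}(\mathbb{F}_q)$ and the remaining $q-2$ contain exactly $q-2$ points of $\mathcal{X}(\mathbb{F}_q)$.
   Context: $\mathcal{X}(\mathbb{F}_q)=\mathcal{X}\cap\mathbb{P}^2(\mathbb{F}_q)$, $\mathrm{N}_q(\mathcal{X})=\#\mathcal{X}(\mathbb{F}_q)$; "without $\mathbb{F}_q$-linear components" means no line defined over $\mathbb{F}_q$ is a component. For $0\le i\le q+1$, $\mathcal{A}_i$ is the set of lines $l$ defined over $\mathbb{F}_q$ with $\#(l\cap\mathcal{X}(\mathbb{F}_q)) = i$, and $a_i = \#\mathcal{A}_i$. For a point $P \in \mathbb{P}^2(\mathbb{F}_q)$, $\psi_i(P)$ is the number of lines in $\mathcal{A}_i$ passing through $P$. *)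

theory Defs
  imports Main "HOL-Library.Poly_Mapping" "HOL-Library.Product_Plus" "HOL-Library.Cardinality"
begin

text \<open>Ternary polynomials over a field: finitely supported maps from exponent
triples (i,j,k) (standing for X^i Y^j Z^k) to coefficients.\<close>

type_synonym 'a tpoly = "(nat \<times> nat \<times> nat) \<Rightarrow>\<^sub>0 'a"

definition homogeneous_of_degree :: "nat \<Rightarrow> 'a::zero tpoly \<Rightarrow> bool" where
  "homogeneous_of_degree d F \<longleftrightarrow> F \<noteq> 0 \<and> (\<forall>(i,j,k)\<in>Poly_Mapping.keys F. i + j + k = d)"

definition tpeval :: "'a::comm_semiring_1 tpoly \<Rightarrow> 'a \<times> 'a \<times> 'a \<Rightarrow> 'a" where
  "tpeval F v = (case v of (x,y,z) \<Rightarrow>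
     (\<Sum>m\<in>Poly_Mapping.keys F. case m of (i,j,k) \<Rightarrow> Poly_Mapping.lookup F m * x ^ i * y ^ j * z ^ k))"

definition linear_form :: "'a \<times> 'a \<times> 'a \<Rightarrow> 'a::monoid_add tpoly" where
  "linear_form w = (case w of (a,b,c) \<Rightarrow>
     Poly_Mapping.single (1,0,0) a + Poly_Mapping.single (0,1,0) b + Poly_Mapping.single (0,0,1) c)"

text \<open>No line defined over the base field is a component: no nonzero linear form
with coefficients in the field divides the defining polynomial.\<close>
definition no_linear_components :: "'a::field tpoly \<Rightarrow> bool" where
  "no_linear_components F \<longleftrightarrow> (\<forall>w. w \<noteq> (0,0,0) \<longrightarrow> \<not> linear_form w dvd F)"

text \<open>Points (and, dually, lines) of the projective plane over the field 'a:
classes of nonzero triples modulo nonzero scalars.\<close>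
definition proj_class :: "'a::field \<times> 'a \<times> 'a \<Rightarrow> ('a \<times> 'a \<times> 'a) set" where
  "proj_class v = {(c * fst v, c * fst (snd v), c * snd (snd v)) | c. c \<noteq> 0}"

definition P2 :: "('a::field \<times> 'a \<times> 'a) set set" where
  "P2 = {proj_class v | v. v \<noteq> (0,0,0)}"

definition dot3 :: "'a::comm_semiring_1 \<times> 'a \<times> 'a \<Rightarrow> 'a \<times> 'a \<times> 'a \<Rightarrow> 'a" where
  "dot3 v w = fst v * fst w + fst (snd v) * fst (snd w) + snd (snd v) * snd (snd w)"

definition incident :: "('a::field \<times> 'a \<times> 'a) set \<Rightarrow> ('a \<times> 'a \<times> 'a) set \<Rightarrow> bool" where
  "incident P l \<longleftrightarrow> (\<exists>v\<in>P. \<exists>w\<in>l. dot3 v w = 0)"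

definition rat_points :: "'a::field tpoly \<Rightarrow> ('a \<times> 'a \<times> 'a) set set" where
  "rat_points F = {P \<in> P2. \<exists>v\<in>P. tpeval F v = 0}"

definition Nq :: "'a::field tpoly \<Rightarrow> nat" where
  "Nq F = card (rat_points F)"

definition line_count :: "'a::field tpoly \<Rightarrow> ('a \<times> 'a \<times> 'a) set \<Rightarrow> nat" where
  "line_count F l = card {P \<in> rat_points F. incident P l}"

definition lines_A :: "'a::field tpoly \<Rightarrow> nat \<Rightarrow> ('a \<times> 'a \<times> 'a) set set" where
  "lines_A F i = {l \<in> P2. line_count F l = i}"

definition a_count :: "'a::field tpoly \<Rightarrow> nat \<Rightarrow> nat" where
  "a_count F i = card (lines_A F i)"

definition psi :: "'a::field tpoly \<Rightarrow> nat \<Rightarrow> ('a \<times> 'a \<times> 'a) set \<Rightarrow> nat" where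
  "psi F i P = card {l \<in> lines_A F i. incident P l}"

end

theory Submission
  imports Defs "HOL-Computational_Algebra.Polynomial"
begin

definition mon :: "nat \<times> nat \<times> nat \<Rightarrow> 'a::comm_semiring_1 \<times> 'a \<times> 'a \<Rightarrow> 'a" where
  "mon m v = (case m of (i,j,k) \<Rightarrow> case v of (x,y,z) \<Rightarrow> x^i*y^j*z^k)"

lemma tpeval_alt: "tpeval F v = (\<Sum>m\<in>Poly_Mapping.keys F. Poly_Mapping.lookup F m * mon m v)"
  unfolding tpeval_def mon_def
  by (cases v) (auto intro!: sum.cong simp: mult.assoc split: prod.splits)

lemma tpeval_superset:
  assumes "finite S" "Poly_Mapping.keys F \<subseteq> S"
  shows "tpeval F v = (\<Sum>m\<in>S. Poly_Mapping.lookup F m * mon m v)"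
  unfolding tpeval_alt
  by (rule sum.mono_neutral_left) (use assms in \<open>auto simp: in_keys_iff\<close>)

lemma tpeval_add: "tpeval (F + G) v = tpeval F v + tpeval G v"
proof -
  let ?S = "Poly_Mapping.keys F \<union> Poly_Mapping.keys G"
  have "tpeval (F + G) v = (\<Sum>m\<in>?S. Poly_Mapping.lookup (F+G) m * mon m v)"
    by (rule tpeval_superset) (auto dest: keys_add[THEN subsetD])
  also have "\<dots> = (\<Sum>m\<in>?S. Poly_Mapping.lookup F m * mon m v) + (\<Sum>m\<in>?S. Poly_Mapping.lookup G m * mon m v)"
    by (simp add: lookup_add distrib_right sum.distrib)
  also have "\<dots> = tpeval F v + tpeval G v"
    by (simp add: tpeval_superset[symmetric])
  finally show ?thesis .
qed

lemma tpeval_zero[simp]: "tpeval 0 v = 0"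
  by (simp add: tpeval_alt)

lemma tpeval_sum: "tpeval (\<Sum>i\<in>I. f i) v = (\<Sum>i\<in>I. tpeval (f i) v)"
  by (induction I rule: infinite_finite_induct) (auto simp: tpeval_add)

lemma tpeval_single: "tpeval (Poly_Mapping.single m c) v = c * mon m v"
  by (simp add: tpeval_alt)

lemma mon_add: "mon (m + n) v = mon m v * mon n v"
  by (cases m; cases n; cases v) (simp add: mon_def power_add mult_ac)

lemma mon_zero[simp]: "mon 0 v = 1"
  by (cases v) (simp add: mon_def zero_prod_def)

lemma pm_expand: "F = (\<Sum>m\<in>Poly_Mapping.keys F. Poly_Mapping.single m (Poly_Mapping.lookup F m))"
proof (rule poly_mapping_eqI)
  fix k
  show "Poly_Mapping.lookup F k = Poly_Mapping.lookup (\<Sum>m\<in>Poly_Mapping.keys F. Poly_Mapping.single m (Poly_Mapping.lookup F m)) k"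
    by (simp add: lookup_sum lookup_single when_def in_keys_iff)
qed

lemma tpeval_mult: "tpeval (F * G) v = tpeval F v * tpeval G v"
proof -
  have "F * G = (\<Sum>m\<in>Poly_Mapping.keys F. Poly_Mapping.single m (Poly_Mapping.lookup F m)) *
     (\<Sum>n\<in>Poly_Mapping.keys G. Poly_Mapping.single n (Poly_Mapping.lookup G n))"
    using pm_expand[of F] pm_expand[of G] by simp
  also have "\<dots> = (\<Sum>m\<in>Poly_Mapping.keys F. \<Sum>n\<in>Poly_Mapping.keys G.
       Poly_Mapping.single (m + n) (Poly_Mapping.lookup F m * Poly_Mapping.lookup G n))"
    by (simp add: sum_product mult_single)
  finally have "tpeval (F * G) v = (\<Sum>m\<in>Poly_Mapping.keys F. \<Sum>n\<in>Poly_Mapping.keys G.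
       (Poly_Mapping.lookup F m * mon m v) * (Poly_Mapping.lookup G n * mon n v))"
    by (simp add: tpeval_sum tpeval_single mon_add algebra_simps)
  also have "\<dots> = tpeval F v * tpeval G v"
    by (simp add: tpeval_alt sum_product)
  finally show ?thesis .
qed

lemma tpeval_one[simp]: "tpeval 1 v = 1"
  by (simp add: tpeval_alt)

lemma tpeval_power: "tpeval (F ^ n) v = tpeval F v ^ n"
  by (induction n) (auto simp: tpeval_mult)

lemma tpeval_uminus: "tpeval (- F) v = - tpeval F v"
  for F :: "'a::comm_ring_1 tpoly"
  using tpeval_add[of F "-F" v] by (simp add: eq_neg_iff_add_eq_0 add.commute)

lemma tpeval_diff: "tpeval (F - G) v = tpeval F v - tpeval G v"
  for F :: "'a::comm_ring_1 tpoly"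
  using tpeval_add[of F "-G" v] by (simp add: tpeval_uminus)

definition vX :: "'a::comm_semiring_1 tpoly" where "vX = Poly_Mapping.single (1,0,0) 1"
definition vY :: "'a::comm_semiring_1 tpoly" where "vY = Poly_Mapping.single (0,1,0) 1"
definition vZ :: "'a::comm_semiring_1 tpoly" where "vZ = Poly_Mapping.single (0,0,1) 1"

definition monp :: "nat \<times> nat \<times> nat \<Rightarrow> 'a::comm_semiring_1 tpoly \<Rightarrow> 'a tpoly \<Rightarrow> 'a tpoly \<Rightarrow> 'a tpoly" where
  "monp m A B C = (case m of (i,j,k) \<Rightarrow> A^i * B^j * C^k)"

definition subst :: "'a::comm_semiring_1 tpoly \<Rightarrow> 'a tpoly \<Rightarrow> 'a tpoly \<Rightarrow> 'a tpoly \<Rightarrow> 'a tpoly" where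
  "subst F A B C = (\<Sum>m\<in>Poly_Mapping.keys F. Poly_Mapping.single 0 (Poly_Mapping.lookup F m) * monp m A B C)"

lemma single_000[simp]: "Poly_Mapping.single (0,0,0) (1::'a::comm_semiring_1) = 1"
  by (metis single_one zero_prod_def)

lemma vX_pow: "(vX::'a::comm_semiring_1 tpoly) ^ i = Poly_Mapping.single (i,0,0) 1"
  by (induction i) (auto simp: vX_def mult_single)
lemma vY_pow: "(vY::'a::comm_semiring_1 tpoly) ^ i = Poly_Mapping.single (0,i,0) 1"
  by (induction i) (auto simp: vY_def mult_single)
lemma vZ_pow: "(vZ::'a::comm_semiring_1 tpoly) ^ i = Poly_Mapping.single (0,0,i) 1"
  by (induction i) (auto simp: vZ_def mult_single)

lemma single_monp: "Poly_Mapping.single m c = Poly_Mapping.single 0 c * monp m vX vY vZ"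
  by (cases m) (simp add: monp_def vX_pow vY_pow vZ_pow mult_single)

lemma subst_id: "subst F vX vY vZ = F"
  unfolding subst_def using pm_expand[of F] by (simp add: single_monp[symmetric])

lemma tpeval_monp: "tpeval (monp m A B C) v = mon m (tpeval A v, tpeval B v, tpeval C v)"
  by (cases m) (simp add: monp_def mon_def tpeval_mult tpeval_power)

lemma tpeval_subst: "tpeval (subst F A B C) v = tpeval F (tpeval A v, tpeval B v, tpeval C v)"
  by (simp add: subst_def tpeval_sum tpeval_mult tpeval_single tpeval_monp tpeval_alt[of F])

lemma cong_pow: fixes L :: "'a::comm_ring_1"
  assumes "L dvd (a - b)" shows "L dvd (a^n - b^n)"
proof (induction n)
  case (Suc n)
  have "a^Suc n - b^Suc n = a*(a^n - b^n) + b^n*(a-b)" by (simp add: algebra_simps)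
  then show ?case using Suc assms by simp
qed simp

lemma cong_mult: fixes L :: "'a::comm_ring_1"
  assumes "L dvd (a - b)" "L dvd (c - d)" shows "L dvd (a*c - b*d)"
proof -
  have "a*c - b*d = a*(c-d) + d*(a-b)" by (simp add: algebra_simps)
  then show ?thesis using assms by simp
qed

lemma subst_cong:
  fixes L :: "'a::comm_ring_1 tpoly"
  assumes "L dvd (A - A')" "L dvd (B - B')" "L dvd (C - C')"
  shows "L dvd (subst F A B C - subst F A' B' C')"
proof -
  have "L dvd (Poly_Mapping.single 0 (Poly_Mapping.lookup F m) * monp m A B C -
               Poly_Mapping.single 0 (Poly_Mapping.lookup F m) * monp m A' B' C')" for m
  proof -
    obtain i j k where mm: "m = (i,j,k)" by (cases m) auto
    have "L dvd (A^i - A'^i)" "L dvd (B^j - B'^j)" "L dvd (C^k - C'^k)"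
      using assms by (auto intro: cong_pow)
    then have "L dvd (A^i * B^j * C^k - A'^i * B'^j * C'^k)"
      by (intro cong_mult)
    then have "L dvd (monp m A B C - monp m A' B' C')" by (simp add: monp_def mm)
    then show ?thesis by (metis dvd_mult right_diff_distrib)
  qed
  then show ?thesis
    unfolding subst_def sum_subtractf[symmetric] by (intro dvd_sum) auto
qed

definition tdeg :: "nat \<times> nat \<times> nat \<Rightarrow> nat" where
  "tdeg m = fst m + fst (snd m) + snd (snd m)"

lemma tdeg_add: "tdeg (m + n) = tdeg m + tdeg n"
  by (simp add: tdeg_def)

definition hom_in :: "(nat \<times> nat \<times> nat \<Rightarrow> bool) \<Rightarrow> nat \<Rightarrow> 'a::zero tpoly \<Rightarrow> bool" where
  "hom_in \<phi> n P \<longleftrightarrow> (\<forall>m\<in>Poly_Mapping.keys P. \<phi> m \<and> tdeg m = n)"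

lemma hom_in_zero[simp]: "hom_in \<phi> n 0"
  by (simp add: hom_in_def)

lemma hom_in_add: "hom_in \<phi> n P \<Longrightarrow> hom_in \<phi> n Q \<Longrightarrow> hom_in \<phi> n (P + Q)"
  unfolding hom_in_def using keys_add[of P Q] by (meson in_mono Un_iff)

lemma hom_in_sum: "(\<And>i. i \<in> I \<Longrightarrow> hom_in \<phi> n (f i)) \<Longrightarrow> hom_in \<phi> n (\<Sum>i\<in>I. f i)"
proof (induction I rule: infinite_finite_induct)
  case (insert x F)
  then show ?case by (simp add: hom_in_add)
qed simp_all

lemma hom_in_mult:
  fixes P Q :: "'a::comm_semiring_1 tpoly"
  assumes "\<And>a b. \<phi> a \<Longrightarrow> \<phi> b \<Longrightarrow> \<phi> (a + b)"
    and "hom_in \<phi> n P" "hom_in \<phi> k Q"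
  shows "hom_in \<phi> (n + k) (P * Q)"
  unfolding hom_in_def
proof
  fix m assume "m \<in> Poly_Mapping.keys (P * Q)"
  then obtain a b where "m = a + b" "a \<in> Poly_Mapping.keys P" "b \<in> Poly_Mapping.keys Q"
    using keys_mult by blast
  then show "\<phi> m \<and> tdeg m = n + k"
    using assms unfolding hom_in_def by (auto simp: tdeg_add)
qed

lemma hom_in_one: "\<phi> 0 \<Longrightarrow> hom_in \<phi> 0 (1::'a::comm_semiring_1 tpoly)"
  by (simp add: hom_in_def tdeg_def)

lemma hom_in_const: "\<phi> 0 \<Longrightarrow> hom_in \<phi> 0 (Poly_Mapping.single 0 (c::'a::comm_semiring_1))"
  by (simp add: hom_in_def tdeg_def)

lemma hom_in_power:
  fixes P :: "'a::comm_semiring_1 tpoly"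
  assumes "\<And>a b. \<phi> a \<Longrightarrow> \<phi> b \<Longrightarrow> \<phi> (a + b)" "\<phi> 0" "hom_in \<phi> 1 P"
  shows "hom_in \<phi> k (P ^ k)"
proof (induction k)
  case 0 then show ?case using assms by (simp add: hom_in_one)
next
  case (Suc k)
  then show ?case using hom_in_mult[OF assms(1) assms(3) Suc] by simp
qed

lemma hom_in_subst:
  fixes F A B C :: "'a::comm_semiring_1 tpoly"
  assumes "\<And>a b. \<phi> a \<Longrightarrow> \<phi> b \<Longrightarrow> \<phi> (a + b)" "\<phi> 0"
    and "hom_in \<phi> 1 A" "hom_in \<phi> 1 B" "hom_in \<phi> 1 C"
    and "\<forall>m\<in>Poly_Mapping.keys F. tdeg m = d"
  shows "hom_in \<phi> d (subst F A B C)"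
  unfolding subst_def
proof (rule hom_in_sum)
  fix m assume m: "m \<in> Poly_Mapping.keys F"
  obtain i j k where mm: "m = (i,j,k)" by (cases m) auto
  have "hom_in \<phi> (0 + (i + j + k)) (Poly_Mapping.single 0 (Poly_Mapping.lookup F m) * monp m A B C)"
  proof -
    have "hom_in \<phi> i (A^i)" "hom_in \<phi> j (B^j)" "hom_in \<phi> k (C^k)"
      using hom_in_power[OF assms(1,2)] assms(3-5) by auto
    then have "hom_in \<phi> (i + j + k) (A^i * B^j * C^k)"
      using assms(1) by (intro hom_in_mult) 
    then show ?thesis unfolding monp_def mm
      using hom_in_mult[OF assms(1) hom_in_const[of \<phi>, OF assms(2)]] by simp
  qed
  then show "hom_in \<phi> d (Poly_Mapping.single 0 (Poly_Mapping.lookup F m) * monp m A B C)"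
  proof -
    have "i + j + k = d" using assms(6) m mm unfolding tdeg_def by force
    then show ?thesis using \<open>hom_in \<phi> (0 + (i + j + k)) _\<close> by simp
  qed
qed

lemma sum_at_y0: "(\<Sum>s\<le>d. r s * x ^ s * (0::'a::field) ^ (d - s)) = r d * x ^ d"
proof -
  have "(\<Sum>s\<le>d. r s * x ^ s * (0::'a) ^ (d - s)) = r d * x ^ d * 0 ^ (d - d) + (\<Sum>s\<in>{..d} - {d}. r s * x ^ s * (0::'a) ^ (d - s))"
    by (subst sum.remove[of _ d]) auto
  also have "(\<Sum>s\<in>{..d} - {d}. r s * x ^ s * (0::'a) ^ (d - s)) = 0"
    by (intro sum.neutral) auto
  finally show ?thesis by simp
qed

lemma bf_zero:
  fixes r :: "nat \<Rightarrow> 'a::field" and Q :: "('a \<times> 'a) set"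
  assumes fin: "finite Q" and card: "card Q \<ge> Suc d"
    and nz: "\<forall>p\<in>Q. p \<noteq> (0,0)"
    and np: "\<forall>p\<in>Q. \<forall>p'\<in>Q. \<forall>c. fst p = c * fst p' \<and> snd p = c * snd p' \<longrightarrow> p = p'"
    and van: "\<forall>p\<in>Q. (\<Sum>s\<le>d. r s * fst p ^ s * snd p ^ (d - s)) = 0"
  shows "\<forall>s\<le>d. r s = 0"
proof -
  define P where "P = (\<Sum>s\<le>d. monom (r s) s)"
  have coeffP: "coeff P s = (if s \<le> d then r s else 0)" for s
    by (simp add: P_def coeff_sum coeff_monom)
  have degP: "degree P \<le> d"
    by (rule degree_le) (simp add: coeffP)
  have polyP: "poly P x = (\<Sum>s\<le>d. r s * x^s)" for x
    by (simp add: P_def poly_sum poly_monom)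
  define Q' where "Q' = {p\<in>Q. snd p \<noteq> 0}"
  have roots: "(\<lambda>p. fst p / snd p) ` Q' \<subseteq> {x. poly P x = 0}"
  proof
    fix z assume "z \<in> (\<lambda>p. fst p / snd p) ` Q'"
    then obtain x y where xy: "(x,y) \<in> Q" "y \<noteq> 0" "z = x / y" unfolding Q'_def by auto
    have "poly P z * y ^ d = (\<Sum>s\<le>d. r s * x ^ s * y ^ (d - s))"
      unfolding polyP sum_distrib_right
    proof (rule sum.cong)
      fix s assume "s \<in> {..d}"
      then have "y ^ d = y ^ s * y ^ (d - s)" by (simp add: power_add[symmetric])
      then show "r s * z ^ s * y ^ d = r s * x ^ s * y ^ (d - s)"
        using xy by (simp add: power_divide field_simps power_mult_distrib[symmetric])
    qed simp
    also have "\<dots> = 0" using van xy by force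
    finally show "z \<in> {x. poly P x = 0}" using xy by simp
  qed
  have inj: "inj_on (\<lambda>p. fst p / snd p) Q'"
  proof (rule inj_onI)
    fix p p' assume p: "p \<in> Q'" "p' \<in> Q'" "fst p / snd p = fst p' / snd p'"
    have "fst p = (snd p / snd p') * fst p'" "snd p = (snd p / snd p') * snd p'"
      using p unfolding Q'_def by (auto simp: field_simps)
    then show "p = p'" using np p unfolding Q'_def by blast
  qed
  have sub: "\<forall>p\<in>Q - Q'. \<forall>p'\<in>Q - Q'. p = p'"
  proof (intro ballI)
    fix p p' assume p: "p \<in> Q - Q'" "p' \<in> Q - Q'"
    then have "snd p = 0" "snd p' = 0" "fst p' \<noteq> 0" using nz unfolding Q'_def
      by (auto simp: prod_eq_iff)
    then have "fst p = (fst p / fst p') * fst p'" "snd p = (fst p / fst p') * snd p'" by auto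
    then show "p = p'" using np p by blast
  qed
  have cardQ: "card Q = card Q' + card (Q - Q')"
    using fin unfolding Q'_def by (metis (no_types, lifting) card_Diff_subset card_mono diff_add_inverse2 le_add_diff_inverse mem_Collect_eq subsetI finite_subset) 
  have P0: "P = 0"
  proof (rule ccontr)
    assume "P \<noteq> 0"
    have "card Q' = card ((\<lambda>p. fst p / snd p) ` Q')" using inj by (simp add: card_image)
    also have "\<dots> \<le> card {x. poly P x = 0}"
      by (rule card_mono[OF poly_roots_finite[OF \<open>P \<noteq> 0\<close>] roots])
    also have "\<dots> \<le> degree P" by (rule card_poly_roots_bound[OF \<open>P \<noteq> 0\<close>])
    finally have c1: "card Q' \<le> degree P" .
    show False
    proof (cases "Q - Q' = {}")
      case True
      then have "card (Q - Q') = 0" by (metis card.empty)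
      then show ?thesis using cardQ c1 degP card by linarith
    next
      case False
      then obtain p0 where p0: "p0 \<in> Q - Q'" by blast
      then have "Q - Q' = {p0}" using sub by blast
      then have cq: "card Q = card Q' + 1" using cardQ by simp
      have "snd p0 = 0" "p0 \<in> Q" using p0 unfolding Q'_def by auto
      then have "fst p0 \<noteq> 0" using nz by (auto simp: prod_eq_iff)
      have "r d * fst p0 ^ d = 0"
        using van \<open>p0 \<in> Q\<close> \<open>snd p0 = 0\<close> sum_at_y0[of r "fst p0" d] by force
      then have "r d = 0" using \<open>fst p0 \<noteq> 0\<close> by simp
      then have "coeff P d = 0" by (simp add: coeffP)
      then have "degree P \<noteq> d" using \<open>P \<noteq> 0\<close> by (metis leading_coeff_0_iff)
      then have "degree P < d" using degP by simp
      then show ?thesis using cq c1 card by simp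
    qed
  qed
  show ?thesis using coeffP P0 by (metis coeff_0)
qed

definition smul :: "'a::comm_semiring_1 \<Rightarrow> 'a \<times> 'a \<times> 'a \<Rightarrow> 'a \<times> 'a \<times> 'a" where
  "smul c v = (c * fst v, c * fst (snd v), c * snd (snd v))"

lemma proj_class_smul: "proj_class v = {smul c v | c. c \<noteq> 0}"
  by (simp add: proj_class_def smul_def)

lemma smul_smul: "smul a (smul b v) = smul (a*b) v"
  by (simp add: smul_def mult.assoc)

lemma smul_one[simp]: "smul 1 v = v" by (simp add: smul_def)

lemma smul_eq_0: "smul c (v::'a::field \<times> 'a \<times> 'a) = (0,0,0) \<longleftrightarrow> c = 0 \<or> v = (0,0,0)"
  by (cases v) (auto simp: smul_def)

lemma self_in_proj_class: "v \<in> proj_class v"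
  unfolding proj_class_smul by (rule CollectI, rule exI[of _ 1]) simp

lemma proj_class_mem_eq:
  fixes v :: "'a::field \<times> 'a \<times> 'a"
  assumes "u \<in> proj_class v" shows "proj_class u = proj_class v"
proof -
  obtain c where c: "c \<noteq> 0" "u = smul c v" using assms unfolding proj_class_smul by auto
  show ?thesis
  proof
    show "proj_class u \<subseteq> proj_class v"
      unfolding proj_class_smul c using c(1) by (auto simp: smul_smul)
    show "proj_class v \<subseteq> proj_class u"
    proof
      fix x assume "x \<in> proj_class v"
      then obtain e where e: "e \<noteq> 0" "x = smul e v" unfolding proj_class_smul by auto
      have "x = smul (e / c) u" using c e by (simp add: smul_smul)
      then show "x \<in> proj_class u" unfolding proj_class_smul using c e by auto
    qed
  qed
qed

lemma P2_mem_eq: "P \<in> P2 \<Longrightarrow> u \<in> P \<Longrightarrow> P = proj_class u"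
  unfolding P2_def using proj_class_mem_eq by fastforce

lemma P2_nonzero: "P \<in> P2 \<Longrightarrow> u \<in> P \<Longrightarrow> u \<noteq> (0,0,(0::'a::field))"
  unfolding P2_def proj_class_smul by (auto simp: smul_eq_0)

lemma P2_nonempty: "P \<in> P2 \<Longrightarrow> \<exists>u. u \<in> P"
  unfolding P2_def using self_in_proj_class by blast

lemma dot3_smul: "dot3 (smul c v) (smul e w) = c * e * dot3 v w"
  by (simp add: dot3_def smul_def algebra_simps)

lemma incident_iff:
  fixes P l :: "('a::field \<times> 'a \<times> 'a) set"
  assumes "P \<in> P2" "l \<in> P2" "v \<in> P" "w \<in> l"
  shows "incident P l \<longleftrightarrow> dot3 v w = 0"
proof -
  have P: "P = proj_class v" and l: "l = proj_class w" using assms P2_mem_eq by blast+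
  show ?thesis
  proof
    assume "incident P l"
    then obtain v' w' where "v' \<in> P" "w' \<in> l" "dot3 v' w' = 0" unfolding incident_def by blast
    then obtain c e where "c \<noteq> 0" "e \<noteq> 0" "v' = smul c v" "w' = smul e w"
      unfolding P l proj_class_smul by blast
    then show "dot3 v w = 0" using \<open>dot3 v' w' = 0\<close> by (simp add: dot3_smul)
  next
    assume "dot3 v w = 0"
    then show "incident P l" unfolding incident_def using assms(3,4) by blast
  qed
qed

lemma mon_smul: "mon m (smul c v) = c ^ tdeg m * mon m v"
  by (cases m; cases v) (simp add: mon_def smul_def tdeg_def power_add power_mult_distrib mult_ac)

lemma tpeval_smul:
  assumes "\<forall>m\<in>Poly_Mapping.keys F. tdeg m = d"
  shows "tpeval F (smul c v) = c ^ d * tpeval F v"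
  unfolding tpeval_alt sum_distrib_left
  by (rule sum.cong) (use assms in \<open>auto simp: mon_smul mult_ac\<close>)

lemma homog_keys: "homogeneous_of_degree d F \<Longrightarrow> \<forall>m\<in>Poly_Mapping.keys F. tdeg m = d"
  unfolding homogeneous_of_degree_def tdeg_def by auto

lemma rat_points_all:
  fixes F :: "'a::field tpoly"
  assumes "\<forall>m\<in>Poly_Mapping.keys F. tdeg m = d" "P \<in> rat_points F" "u \<in> P"
  shows "tpeval F u = 0"
proof -
  from assms(2) obtain v where v: "P \<in> P2" "v \<in> P" "tpeval F v = 0" unfolding rat_points_def by auto
  have "P = proj_class v" using v P2_mem_eq by blast
  then obtain c where "u = smul c v" using assms(3) unfolding proj_class_smul by auto
  then show ?thesis using tpeval_smul[OF assms(1)] v by simp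
qed

lemma core:
  fixes F L A B C :: "'a::field tpoly" and pt :: "'a \<Rightarrow> 'a \<Rightarrow> 'a \<times> 'a \<times> 'a"
  assumes keysF: "\<forall>m\<in>Poly_Mapping.keys F. tdeg m = d"
    and \<phi>add: "\<And>a b. \<phi> a \<Longrightarrow> \<phi> b \<Longrightarrow> \<phi> (a + b)" and \<phi>0: "\<phi> 0"
    and hA: "hom_in \<phi> 1 A" and hB: "hom_in \<phi> 1 B" and hC: "hom_in \<phi> 1 C"
    and dA: "L dvd (vX - A)" and dB: "L dvd (vY - B)" and dC: "L dvd (vZ - C)"
    and ginj: "inj_on g {..d}" and gcov: "\<And>m. \<phi> m \<Longrightarrow> tdeg m = d \<Longrightarrow> m \<in> g ` {..d}"
    and monf: "\<And>s x y. s \<le> d \<Longrightarrow> mon (g s) (pt x y) = x ^ s * y ^ (d - s)"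
    and fin: "finite Q" and card: "card Q \<ge> Suc d"
    and nz: "\<forall>p\<in>Q. p \<noteq> (0,0)"
    and np: "\<forall>p\<in>Q. \<forall>p'\<in>Q. \<forall>c. fst p = c * fst p' \<and> snd p = c * snd p' \<longrightarrow> p = p'"
    and van: "\<forall>p\<in>Q. tpeval F (tpeval A (pt (fst p) (snd p)), tpeval B (pt (fst p) (snd p)),
                                tpeval C (pt (fst p) (snd p))) = 0"
  shows "L dvd F"
proof -
  define R where "R = subst F A B C"
  have hR: "hom_in \<phi> d R" unfolding R_def
    by (rule hom_in_subst[OF \<phi>add \<phi>0 hA hB hC keysF])
  have kR: "Poly_Mapping.keys R \<subseteq> g ` {..d}"
    using hR gcov unfolding hom_in_def by blast
  have evR: "tpeval R (pt x y) = (\<Sum>s\<le>d. Poly_Mapping.lookup R (g s) * x ^ s * y ^ (d - s))" for x y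
  proof -
    have "tpeval R (pt x y) = (\<Sum>m\<in>g ` {..d}. Poly_Mapping.lookup R m * mon m (pt x y))"
      by (rule tpeval_superset[OF _ kR]) simp
    also have "\<dots> = (\<Sum>s\<le>d. Poly_Mapping.lookup R (g s) * mon (g s) (pt x y))"
      by (rule sum.reindex[OF ginj, unfolded comp_def])
    also have "\<dots> = (\<Sum>s\<le>d. Poly_Mapping.lookup R (g s) * x ^ s * y ^ (d - s))"
      by (rule sum.cong) (auto simp: monf mult.assoc)
    finally show ?thesis .
  qed
  have "\<forall>s\<le>d. Poly_Mapping.lookup R (g s) = 0"
  proof (rule bf_zero[OF fin card nz np])
    show "\<forall>p\<in>Q. (\<Sum>s\<le>d. Poly_Mapping.lookup R (g s) * fst p ^ s * snd p ^ (d - s)) = 0"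
    proof
      fix p assume "p \<in> Q"
      have "(\<Sum>s\<le>d. Poly_Mapping.lookup R (g s) * fst p ^ s * snd p ^ (d - s)) = tpeval R (pt (fst p) (snd p))"
        by (rule evR[symmetric])
      also have "\<dots> = 0" using van \<open>p \<in> Q\<close> by (simp add: R_def tpeval_subst)
      finally show "(\<Sum>s\<le>d. Poly_Mapping.lookup R (g s) * fst p ^ s * snd p ^ (d - s)) = 0" .
    qed
  qed
  then have "R = 0"
  proof (intro poly_mapping_eqI)
    fix k assume h: "\<forall>s\<le>d. Poly_Mapping.lookup R (g s) = 0"
    show "Poly_Mapping.lookup R k = Poly_Mapping.lookup 0 k"
    proof (cases "k \<in> Poly_Mapping.keys R")
      case True
      then obtain s where "s \<le> d" "k = g s" using kR by blast
      then show ?thesis using h by simp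
    next
      case False then show ?thesis by (simp add: in_keys_iff)
    qed
  qed
  moreover have "L dvd (F - R)"
    unfolding R_def using subst_cong[OF dA dB dC, of F] by (simp add: subst_id)
  ultimately show ?thesis by simp
qed

definition ev3 :: "'a::comm_semiring_1 tpoly \<Rightarrow> 'a tpoly \<Rightarrow> 'a tpoly \<Rightarrow> 'a \<times> 'a \<times> 'a \<Rightarrow> 'a \<times> 'a \<times> 'a" where
  "ev3 A B C u = (tpeval A u, tpeval B u, tpeval C u)"

lemma core2:
  fixes F L A B C :: "'a::field tpoly" and pt :: "'a \<Rightarrow> 'a \<Rightarrow> 'a \<times> 'a \<times> 'a"
    and \<pi> :: "'a \<times> 'a \<times> 'a \<Rightarrow> 'a \<times> 'a"
  assumes keysF: "\<forall>m\<in>Poly_Mapping.keys F. tdeg m = d"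
    and \<phi>add: "\<And>a b. \<phi> a \<Longrightarrow> \<phi> b \<Longrightarrow> \<phi> (a + b)" and \<phi>0: "\<phi> 0"
    and hA: "hom_in \<phi> 1 A" and hB: "hom_in \<phi> 1 B" and hC: "hom_in \<phi> 1 C"
    and dA: "L dvd (vX - A)" and dB: "L dvd (vY - B)" and dC: "L dvd (vZ - C)"
    and ginj: "inj_on g {..d}" and gcov: "\<And>m. \<phi> m \<Longrightarrow> tdeg m = d \<Longrightarrow> m \<in> g ` {..d}"
    and monf: "\<And>s x y. s \<le> d \<Longrightarrow> mon (g s) (pt x y) = x ^ s * y ^ (d - s)"
    and finS: "finite S" and cardS: "card S \<ge> Suc d"
    and Spts: "\<And>P. P \<in> S \<Longrightarrow> P \<in> P2"
    and Svan: "\<And>P v. P \<in> S \<Longrightarrow> v \<in> P \<Longrightarrow> dot3 v w = 0 \<and> tpeval F v = 0"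
    and recover: "\<And>v. dot3 v w = 0 \<Longrightarrow> ev3 A B C (pt (fst (\<pi> v)) (snd (\<pi> v))) = v"
    and lin: "\<And>c x y. ev3 A B C (pt (c * x) (c * y)) = smul c (ev3 A B C (pt x y))"
  shows "L dvd F"
proof -
  define rep where "rep P = (SOME v. v \<in> P)" for P :: "('a \<times> 'a \<times> 'a) set"
  have rep: "rep P \<in> P" if "P \<in> S" for P
    unfolding rep_def using P2_nonempty[OF Spts[OF that]] by (rule someI_ex)
  define Q where "Q = (\<lambda>P. \<pi> (rep P)) ` S"
  have key: "ev3 A B C (pt (fst (\<pi> (rep P))) (snd (\<pi> (rep P)))) = rep P" if "P \<in> S" for P
    using recover Svan rep that by blast
  have zero: "ev3 A B C (pt 0 0) = (0,0,0)"
    using lin[of 0 0 0] by (simp add: smul_def)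
  have main: "P = P'" if "P \<in> S" "P' \<in> S" "fst (\<pi> (rep P)) = c * fst (\<pi> (rep P'))"
      "snd (\<pi> (rep P)) = c * snd (\<pi> (rep P'))" for P P' c
  proof -
    have e: "rep P = smul c (rep P')"
      using key[OF that(1)] key[OF that(2)] lin[of c] that(3,4) by metis
    have "rep P \<noteq> (0,0,0)" using P2_nonzero Spts rep that(1) by blast
    then have "c \<noteq> 0" using e by (auto simp: smul_def)
    then have "rep P \<in> proj_class (rep P')" using e unfolding proj_class_smul by blast
    then have "rep P \<in> P'" using P2_mem_eq[OF Spts[OF that(2)] rep[OF that(2)]] by simp
    then show "P = P'"
      using P2_mem_eq[OF Spts[OF that(2)]] P2_mem_eq[OF Spts[OF that(1)] rep[OF that(1)]] by metis
  qed
  have inj: "inj_on (\<lambda>P. \<pi> (rep P)) S"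
  proof (rule inj_onI)
    fix P P' assume "P \<in> S" "P' \<in> S" "\<pi> (rep P) = \<pi> (rep P')"
    then show "P = P'" using main[of P P' 1] by simp
  qed
  show ?thesis
  proof (rule core[OF keysF \<phi>add \<phi>0 hA hB hC dA dB dC ginj gcov monf])
    show "finite Q" unfolding Q_def using finS by simp
    show "card Q \<ge> Suc d" unfolding Q_def using cardS inj by (simp add: card_image)
    show "\<forall>p\<in>Q. p \<noteq> (0,0)"
    proof
      fix p assume "p \<in> Q"
      then obtain P where P: "P \<in> S" "p = \<pi> (rep P)" unfolding Q_def by blast
      have "rep P \<noteq> (0,0,0)" using P2_nonzero Spts rep P(1) by blast
      then show "p \<noteq> (0,0)" using key[OF P(1)] zero P(2) by auto
    qed
    show "\<forall>p\<in>Q. \<forall>p'\<in>Q. \<forall>c. fst p = c * fst p' \<and> snd p = c * snd p' \<longrightarrow> p = p'"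
      unfolding Q_def using main by blast
    show "\<forall>p\<in>Q. tpeval F (tpeval A (pt (fst p) (snd p)), tpeval B (pt (fst p) (snd p)),
                                tpeval C (pt (fst p) (snd p))) = 0"
    proof
      fix p assume "p \<in> Q"
      then obtain P where P: "P \<in> S" "p = \<pi> (rep P)" unfolding Q_def by blast
      show "tpeval F (tpeval A (pt (fst p) (snd p)), tpeval B (pt (fst p) (snd p)),
                                tpeval C (pt (fst p) (snd p))) = 0"
        using key[OF P(1)] Svan[OF P(1) rep[OF P(1)]] P(2) by (simp add: ev3_def)
    qed
  qed
qed

lemma hom_in_single: "\<phi> m \<Longrightarrow> tdeg m = n \<Longrightarrow> hom_in \<phi> n (Poly_Mapping.single m k)"
  by (simp add: hom_in_def)

lemma hom_in_uminus: "hom_in \<phi> n P \<Longrightarrow> hom_in \<phi> n (- (P::'a::ab_group_add tpoly))"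
  by (simp add: hom_in_def)

lemma lf_expand: "Poly_Mapping.single 0 k * linear_form (a,b,c) =
   Poly_Mapping.single (1,0,0) (k*a) + Poly_Mapping.single (0,1,0) (k*b) + Poly_Mapping.single (0,0,1) (k*c)"
  by (simp add: linear_form_def distrib_left mult_single)

lemma tpeval_single3[simp]:
  "tpeval (Poly_Mapping.single (1,0,0) k) (x,y,z) = k * x"
  "tpeval (Poly_Mapping.single (0,1,0) k) (x,y,z) = k * y"
  "tpeval (Poly_Mapping.single (0,0,1) k) (x,y,z) = k * z"
  by (simp_all add: tpeval_single mon_def)

lemma tpeval_vXYZ[simp]: "tpeval vX (x,y,z) = x" "tpeval vY (x,y,z) = y" "tpeval vZ (x,y,z) = z"
  by (simp_all add: vX_def vY_def vZ_def tpeval_single mon_def)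

lemma finite_P2: "finite (P2 :: ('a::{finite,field} \<times> 'a \<times> 'a) set set)"
  by (rule finite_subset[of _ UNIV]) auto

lemma solve_lin: fixes a b c x y z :: "'a::field"
  shows "b \<noteq> 0 \<Longrightarrow> x*a + y*b + z*c = 0 \<Longrightarrow> y = -(a/b*x + c/b*z)"
  by (simp add: field_simps) (metis add.commute add.left_commute add_eq_0_iff mult.commute)

lemma line_bound:
  fixes F :: "'a::{finite,field} tpoly"
  assumes hom: "homogeneous_of_degree d F" and nolin: "no_linear_components F" and l: "l \<in> P2"
  shows "line_count F l \<le> d"
proof (rule ccontr)
  assume "\<not> line_count F l \<le> d"
  define S where "S = {P \<in> rat_points F. incident P l}"
  have cardS: "card S \<ge> Suc d" using \<open>\<not> _\<close> unfolding line_count_def S_def by simp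
  have finS: "finite S" unfolding S_def rat_points_def
    by (rule finite_subset[OF _ finite_P2]) auto
  have keysF: "\<forall>m\<in>Poly_Mapping.keys F. tdeg m = d" using homog_keys[OF hom] .
  obtain w where w: "w \<in> l" using P2_nonempty[OF l] by blast
  have wnz: "w \<noteq> (0,0,0)" using P2_nonzero[OF l w] .
  have Spts: "P \<in> P2" if "P \<in> S" for P using that unfolding S_def rat_points_def by auto
  have Svan: "dot3 v w = 0 \<and> tpeval F v = 0" if "P \<in> S" "v \<in> P" for P v
  proof -
    have "P \<in> rat_points F" "incident P l" using that(1) unfolding S_def by auto
    then show ?thesis
      using incident_iff[OF Spts[OF that(1)] l that(2) w] rat_points_all[OF keysF _ that(2)] by blast
  qed
  obtain a b c where wabc: "w = (a,b,c)" by (cases w) auto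
  define L where "L = linear_form w"
  have "L dvd F"
  proof (cases "c \<noteq> 0")
    case True
    define C where "C = - (Poly_Mapping.single (1,0,0) (a/c) + Poly_Mapping.single (0,1,0) (b/c) :: 'a tpoly)"
    have tC: "tpeval C (x,y,z) = - (a/c * x + b/c * y)" for x y z
      unfolding C_def tpeval_uminus tpeval_add tpeval_single3 by simp
    show ?thesis
    proof (rule core2[OF keysF, where \<phi> = "\<lambda>m. snd (snd m) = 0" and A = vX and B = vY and C = C
          and g = "\<lambda>s. (s, d - s, 0)" and pt = "\<lambda>x y. (x, y, 0)" and \<pi> = "\<lambda>v. (fst v, fst (snd v))"
          and S = S and w = w, OF _ _ _ _ _ _ _ _ _ _ _ finS cardS Spts Svan])
      show "hom_in (\<lambda>m. snd (snd m) = 0) 1 vX" "hom_in (\<lambda>m. snd (snd m) = 0) 1 vY"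
        by (auto simp: vX_def vY_def tdeg_def intro!: hom_in_single)
      show "hom_in (\<lambda>m. snd (snd m) = 0) 1 C" unfolding C_def
        by (intro hom_in_uminus hom_in_add hom_in_single) (auto simp: tdeg_def)
      show "L dvd vX - vX" "L dvd vY - vY" by simp_all
      have "vZ - C = Poly_Mapping.single 0 (1/c) * L"
        unfolding L_def wabc lf_expand C_def vZ_def using True by (simp add: add_ac)
      then show "L dvd vZ - C" by simp
      show "inj_on (\<lambda>s. (s, d - s, 0::nat)) {..d}" by (auto intro: inj_onI)
      show "m \<in> (\<lambda>s. (s, d - s, 0)) ` {..d}" if "snd (snd m) = 0" "tdeg m = d" for m
        using that by (cases m) (auto simp: tdeg_def image_iff intro!: bexI[of _ "fst m"])
      show "mon (s, d - s, 0) (x, y, 0) = x ^ s * y ^ (d - s)" if "s \<le> d" for s and x y :: 'a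
        by (simp add: mon_def)
      show "ev3 vX vY C ((\<lambda>x y. (x, y, 0)) (fst ((\<lambda>v. (fst v, fst (snd v))) v)) (snd ((\<lambda>v. (fst v, fst (snd v))) v))) = v"
        if "dot3 v w = 0" for v
      proof (cases v)
        case (fields x y z)
        then have "x*a + y*b + z*c = 0" using that by (simp add: dot3_def wabc)
        then have "z = -(a/c*x + b/c*y)" using solve_lin[of c x a z y b] True by (simp add: add_ac)
        then show ?thesis using fields by (simp add: ev3_def tC)
      qed
      show "ev3 vX vY C ((\<lambda>x y. (x, y, 0)) (k * x) (k * y)) = smul k (ev3 vX vY C ((\<lambda>x y. (x, y, 0)) x y))" for k x y
        unfolding ev3_def smul_def by (simp add: tC field_simps)
    qed auto
  next
    case False
    then have c0: "c = 0" by simp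
    show ?thesis
    proof (cases "b \<noteq> 0")
      case True
      define B where "B = - (Poly_Mapping.single (1,0,0) (a/b) + Poly_Mapping.single (0,0,1) (c/b) :: 'a tpoly)"
    have tB: "tpeval B (x,y,z) = - (a/b * x + c/b * z)" for x y z
      unfolding B_def tpeval_uminus tpeval_add tpeval_single3 by simp
      show ?thesis
      proof (rule core2[OF keysF, where \<phi> = "\<lambda>m. fst (snd m) = 0" and A = vX and B = B and C = vZ
            and g = "\<lambda>s. (s, 0, d - s)" and pt = "\<lambda>x y. (x, 0, y)" and \<pi> = "\<lambda>v. (fst v, snd (snd v))"
            and S = S and w = w, OF _ _ _ _ _ _ _ _ _ _ _ finS cardS Spts Svan])
        show "hom_in (\<lambda>m. fst (snd m) = 0) 1 vX" "hom_in (\<lambda>m. fst (snd m) = 0) 1 vZ"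
          by (auto simp: vX_def vZ_def tdeg_def intro!: hom_in_single)
        show "hom_in (\<lambda>m. fst (snd m) = 0) 1 B" unfolding B_def
          by (intro hom_in_uminus hom_in_add hom_in_single) (auto simp: tdeg_def)
        show "L dvd vX - vX" "L dvd vZ - vZ" by simp_all
        have "vY - B = Poly_Mapping.single 0 (1/b) * L"
          unfolding L_def wabc lf_expand B_def vY_def using True by (simp add: add_ac)
        then show "L dvd vY - B" by simp
        show "inj_on (\<lambda>s. (s, 0::nat, d - s)) {..d}" by (auto intro: inj_onI)
        show "m \<in> (\<lambda>s. (s, 0, d - s)) ` {..d}" if "fst (snd m) = 0" "tdeg m = d" for m
          using that by (cases m) (auto simp: tdeg_def image_iff intro!: bexI[of _ "fst m"])
        show "mon (s, 0, d - s) (x, 0, y) = x ^ s * y ^ (d - s)" if "s \<le> d" for s and x y :: 'a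
          by (simp add: mon_def)
        show "ev3 vX B vZ ((\<lambda>x y. (x, 0, y)) (fst ((\<lambda>v. (fst v, snd (snd v))) v)) (snd ((\<lambda>v. (fst v, snd (snd v))) v))) = v"
          if "dot3 v w = 0" for v
        proof (cases v)
          case (fields x y z)
          then have "x*a + y*b + z*c = 0" using that by (simp add: dot3_def wabc)
          then have "y = -(a/b*x + c/b*z)" using solve_lin[of b x a y z c] True by (simp add: add_ac)
          then show ?thesis using fields by (simp add: ev3_def tB)
        qed
        show "ev3 vX B vZ ((\<lambda>x y. (x, 0, y)) (k * x) (k * y)) = smul k (ev3 vX B vZ ((\<lambda>x y. (x, 0, y)) x y))" for k x y
          unfolding ev3_def smul_def by (simp add: tB field_simps)
      qed auto
    next
      case False
      then have b0: "b = 0" by simp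
      then have a0: "a \<noteq> 0" using wnz c0 wabc by auto
      define A where "A = - (Poly_Mapping.single (0,1,0) (b/a) + Poly_Mapping.single (0,0,1) (c/a) :: 'a tpoly)"
    have tA: "tpeval A (x,y,z) = - (b/a * y + c/a * z)" for x y z
      unfolding A_def tpeval_uminus tpeval_add tpeval_single3 by simp
      show ?thesis
      proof (rule core2[OF keysF, where \<phi> = "\<lambda>m. fst m = 0" and A = A and B = vY and C = vZ
            and g = "\<lambda>s. (0, s, d - s)" and pt = "\<lambda>x y. (0, x, y)" and \<pi> = "\<lambda>v. (fst (snd v), snd (snd v))"
            and S = S and w = w, OF _ _ _ _ _ _ _ _ _ _ _ finS cardS Spts Svan])
        show "hom_in (\<lambda>m. fst m = 0) 1 vY" "hom_in (\<lambda>m. fst m = 0) 1 vZ"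
          by (auto simp: vY_def vZ_def tdeg_def intro!: hom_in_single)
        show "hom_in (\<lambda>m. fst m = 0) 1 A" unfolding A_def
          by (intro hom_in_uminus hom_in_add hom_in_single) (auto simp: tdeg_def)
        show "L dvd vY - vY" "L dvd vZ - vZ" by simp_all
        have "vX - A = Poly_Mapping.single 0 (1/a) * L"
          unfolding L_def wabc lf_expand A_def vX_def using a0 by (simp add: add_ac)
        then show "L dvd vX - A" by simp
        show "inj_on (\<lambda>s. (0::nat, s, d - s)) {..d}" by (auto intro: inj_onI)
        show "m \<in> (\<lambda>s. (0, s, d - s)) ` {..d}" if "fst m = 0" "tdeg m = d" for m
          using that by (cases m) (auto simp: tdeg_def image_iff intro!: bexI[of _ "fst (snd m)"])
        show "mon (0, s, d - s) (0, x, y) = x ^ s * y ^ (d - s)" if "s \<le> d" for s and x y :: 'a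
          by (simp add: mon_def)
        show "ev3 A vY vZ ((\<lambda>x y. (0, x, y)) (fst ((\<lambda>v. (fst (snd v), snd (snd v))) v)) (snd ((\<lambda>v. (fst (snd v), snd (snd v))) v))) = v"
          if "dot3 v w = 0" for v
        proof (cases v)
          case (fields x y z)
          then have "x*a + y*b + z*c = 0" using that by (simp add: dot3_def wabc)
          then have "x = -(b/a*y + c/a*z)" using solve_lin[of a y b x z c] a0 by (simp add: add_ac)
          then show ?thesis using fields by (simp add: ev3_def tA)
        qed
        show "ev3 A vY vZ ((\<lambda>x y. (0, x, y)) (k * x) (k * y)) = smul k (ev3 A vY vZ ((\<lambda>x y. (0, x, y)) x y))" for k x y
          unfolding ev3_def smul_def by (simp add: tA field_simps)
      qed auto
    qed
  qed
  then show False using nolin wnz unfolding no_linear_components_def L_def by blast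
qed

lemma card_UNIV2: "card (UNIV :: ('a::finite \<times> 'a) set) = CARD('a) * CARD('a)"
  by (metis UNIV_Times_UNIV card_cartesian_product)

lemma kernel_card:
  fixes v :: "'a::{finite,field} \<times> 'a \<times> 'a"
  assumes "v \<noteq> (0,0,0)"
  shows "card {w. dot3 v w = 0} = CARD('a) * CARD('a)"
proof -
  obtain a b c where v: "v = (a,b,c)" by (cases v) auto
  have dv: "dot3 v (x,y,z) = 0 \<longleftrightarrow> a*x + b*y + c*z = 0" for x y z by (simp add: v dot3_def)
  consider "a \<noteq> 0" | "b \<noteq> 0" | "c \<noteq> 0" using assms v by auto
  then show ?thesis
  proof cases
    case 1
    let ?f = "\<lambda>(y,z). (-(b/a*y + c/a*z), y, z)"
    have "{w. dot3 v w = 0} = ?f ` UNIV"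
    proof (intro set_eqI iffI)
      fix w assume "w \<in> {w. dot3 v w = 0}"
      then obtain x y z where w: "w = (x,y,z)" "a*x + b*y + c*z = 0" using dv by (cases w) auto
      then have "x = -(b/a*y + c/a*z)" using solve_lin[of a y b x z c] 1 by (simp add: mult_ac add_ac)
      then show "w \<in> ?f ` UNIV" using w by (auto intro!: image_eqI[of _ _ "(y,z)"])
    next
      fix w assume "w \<in> ?f ` UNIV"
      then obtain y z where "w = ?f (y,z)" by auto
      then show "w \<in> {w. dot3 v w = 0}" using 1 by (simp add: dv field_simps)
    qed
    moreover have "inj ?f" by (auto intro!: injI)
    ultimately show ?thesis by (simp add: card_image card_UNIV2)
  next
    case 2
    let ?f = "\<lambda>(x,z). (x, -(a/b*x + c/b*z), z)"
    have "{w. dot3 v w = 0} = ?f ` UNIV"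
    proof (intro set_eqI iffI)
      fix w assume "w \<in> {w. dot3 v w = 0}"
      then obtain x y z where w: "w = (x,y,z)" "a*x + b*y + c*z = 0" using dv by (cases w) auto
      then have "y = -(a/b*x + c/b*z)" using solve_lin[of b x a y z c] 2 by (simp add: mult_ac add_ac)
      then show "w \<in> ?f ` UNIV" using w by (auto intro!: image_eqI[of _ _ "(x,z)"])
    next
      fix w assume "w \<in> ?f ` UNIV"
      then obtain x z where "w = ?f (x,z)" by auto
      then show "w \<in> {w. dot3 v w = 0}" using 2 by (simp add: dv field_simps)
    qed
    moreover have "inj ?f" by (auto intro!: injI)
    ultimately show ?thesis by (simp add: card_image card_UNIV2)
  next
    case 3
    let ?f = "\<lambda>(x,y). (x, y, -(a/c*x + b/c*y))"
    have "{w. dot3 v w = 0} = ?f ` UNIV"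
    proof (intro set_eqI iffI)
      fix w assume "w \<in> {w. dot3 v w = 0}"
      then obtain x y z where w: "w = (x,y,z)" "a*x + b*y + c*z = 0" using dv by (cases w) auto
      then have "z = -(a/c*x + b/c*y)" using solve_lin[of c x a z y b] 3 by (simp add: mult_ac add_ac)
      then show "w \<in> ?f ` UNIV" using w by (auto intro!: image_eqI[of _ _ "(x,y)"])
    next
      fix w assume "w \<in> ?f ` UNIV"
      then obtain x y where "w = ?f (x,y)" by auto
      then show "w \<in> {w. dot3 v w = 0}" using 3 by (simp add: dv field_simps)
    qed
    moreover have "inj ?f" by (auto intro!: injI)
    ultimately show ?thesis by (simp add: card_image card_UNIV2)
  qed
qed

lemma card_proj_class:
  fixes w :: "'a::{finite,field} \<times> 'a \<times> 'a"
  assumes "w \<noteq> (0,0,0)"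
  shows "card (proj_class w) = CARD('a) - 1"
proof -
  have "proj_class w = (\<lambda>c. smul c w) ` (UNIV - {0})"
    unfolding proj_class_smul by auto
  moreover have "inj_on (\<lambda>c. smul c w) (UNIV - {0})"
  proof (rule inj_onI)
    fix c e assume "smul c w = smul e w"
    then have "smul (c - e) w = (0,0,0)" by (simp add: smul_def algebra_simps prod_eq_iff)
    then show "c = e" using assms by (simp add: smul_eq_0)
  qed
  ultimately show ?thesis by (simp add: card_image card_Diff_singleton)
qed

lemma lines_through_eq:
  fixes P :: "('a::field \<times> 'a \<times> 'a) set"
  assumes P: "P \<in> P2" and v: "v \<in> P"
  shows "{l \<in> P2. incident P l} = proj_class ` {w. w \<noteq> (0,0,0) \<and> dot3 v w = 0}"
proof (intro set_eqI iffI)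
  fix l assume l: "l \<in> {l \<in> P2. incident P l}"
  then obtain w where w: "w \<in> l" using P2_nonempty by blast
  have lP: "l \<in> P2" "incident P l" using l by auto
  have "l = proj_class w" "w \<noteq> (0,0,0)" "dot3 v w = 0"
    using P2_mem_eq[OF lP(1) w] P2_nonzero[OF lP(1) w] incident_iff[OF P lP(1) v w] lP(2) by auto
  then show "l \<in> proj_class ` {w. w \<noteq> (0,0,0) \<and> dot3 v w = 0}" by blast
next
  fix l assume "l \<in> proj_class ` {w. w \<noteq> (0,0,0) \<and> dot3 v w = 0}"
  then obtain w where w: "l = proj_class w" "w \<noteq> (0,0,0)" "dot3 v w = 0" by blast
  then have "l \<in> P2" unfolding P2_def by blast
  then show "l \<in> {l \<in> P2. incident P l}"
    using incident_iff[OF P _ v self_in_proj_class] w by auto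
qed

lemma card_lines_through:
  fixes P :: "('a::{finite,field} \<times> 'a \<times> 'a) set"
  assumes P: "P \<in> P2"
  shows "card {l \<in> P2. incident P l} = CARD('a) + 1"
proof -
  obtain v where v: "v \<in> P" using P2_nonempty[OF P] by blast
  have vnz: "v \<noteq> (0,0,0)" using P2_nonzero[OF P v] .
  define W where "W = {w. w \<noteq> (0,0,0) \<and> dot3 v w = 0}"
  define C where "C = proj_class ` W"
  have cW: "card W = CARD('a) * CARD('a) - 1"
  proof -
    have "W = {w. dot3 v w = 0} - {(0,0,0)}" unfolding W_def by auto
    moreover have "(0,0,0) \<in> {w. dot3 v w = 0}" by (simp add: dot3_def)
    ultimately show ?thesis using kernel_card[OF vnz] by (simp add: card_Diff_singleton)
  qed
  have UC: "\<Union>C = W"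
  proof
    show "\<Union>C \<subseteq> W"
    proof
      fix x assume "x \<in> \<Union>C"
      then obtain w c where wc: "w \<in> W" "c \<noteq> 0" "x = smul c w"
        unfolding C_def proj_class_smul by blast
      have "dot3 v x = dot3 (smul 1 v) (smul c w)" using wc by simp
      also have "\<dots> = 0" using wc unfolding W_def by (simp only: dot3_smul) simp
      finally show "x \<in> W" using wc unfolding W_def by (simp add: smul_eq_0)
    qed
    show "W \<subseteq> \<Union>C" unfolding C_def using self_in_proj_class by blast
  qed
  have "(CARD('a) - 1) * card C = card (\<Union>C)"
  proof (rule card_partition)
    show "finite C" by simp
    show "finite (\<Union>C)" by simp
    show "\<And>c. c \<in> C \<Longrightarrow> card c = CARD('a) - 1"
      unfolding C_def W_def using card_proj_class by blast
    show "\<And>c1 c2. c1 \<in> C \<Longrightarrow> c2 \<in> C \<Longrightarrow> c1 \<noteq> c2 \<Longrightarrow> c1 \<inter> c2 = {}"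
      unfolding C_def using proj_class_mem_eq by blast
  qed
  moreover have q2: "CARD('a) \<ge> 2"
    using card_mono[of "UNIV::'a set" "{0,1}"] by simp
  moreover have "CARD('a) * CARD('a) - 1 = (CARD('a) - 1) * (CARD('a) + 1)"
  proof -
    obtain k where "CARD('a) = Suc k" using q2 by (cases "CARD('a)") auto
    then show ?thesis by simp
  qed
  ultimately have "(CARD('a) - 1) * card C = (CARD('a) - 1) * (CARD('a) + 1)"
    using UC cW by simp
  then have "card C = CARD('a) + 1" using q2 by (subst (asm) mult_left_cancel) auto
  then show ?thesis using lines_through_eq[OF P v] unfolding C_def W_def by simp
qed

definition cross :: "'a::comm_ring_1 \<times> 'a \<times> 'a \<Rightarrow> 'a \<times> 'a \<times> 'a \<Rightarrow> 'a \<times> 'a \<times> 'a" where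
  "cross u v = (fst (snd u) * snd (snd v) - snd (snd u) * fst (snd v),
                snd (snd u) * fst v - fst u * snd (snd v),
                fst u * fst (snd v) - fst (snd u) * fst v)"

lemma dot_cross1: "dot3 u (cross u v) = 0"
  by (simp add: dot3_def cross_def algebra_simps)
lemma dot_cross2: "dot3 v (cross u v) = 0"
  by (simp add: dot3_def cross_def algebra_simps)
lemma dot3_comm: "dot3 u v = dot3 v u"
  by (simp add: dot3_def mult.commute)

lemma cross_zero_prop:
  fixes a b :: "'a::field \<times> 'a \<times> 'a"
  assumes "cross a b = (0,0,0)" "b \<noteq> (0,0,0)"
  shows "\<exists>c. a = smul c b"
proof -
  obtain a1 a2 a3 b1 b2 b3 where ab: "a = (a1,a2,a3)" "b = (b1,b2,b3)" by (cases a; cases b) auto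
  have e: "a2*b3 = a3*b2" "a3*b1 = a1*b3" "a1*b2 = a2*b1" using assms(1) by (auto simp: ab cross_def)
  consider "b1 \<noteq> 0" | "b2 \<noteq> 0" | "b3 \<noteq> 0" using assms(2) ab by auto
  then show ?thesis
  proof cases
    case 1
    have "a = smul (a1/b1) b" using 1 e by (simp add: ab smul_def field_simps; metis mult.commute)
    then show ?thesis by blast
  next
    case 2
    have "a = smul (a2/b2) b" using 2 e by (simp add: ab smul_def field_simps; metis mult.commute)
    then show ?thesis by blast
  next
    case 3
    have "a = smul (a3/b3) b" using 3 e by (simp add: ab smul_def field_simps; metis mult.commute)
    then show ?thesis by blast
  qed
qed

lemma bac_cab:
  fixes w u v :: "'a::comm_ring_1 \<times> 'a \<times> 'a"
  assumes "dot3 w u = 0" "dot3 w v = 0"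
  shows "cross w (cross u v) = (0,0,0)"
proof -
  obtain w1 w2 w3 u1 u2 u3 v1 v2 v3 where e: "w = (w1,w2,w3)" "u = (u1,u2,u3)" "v = (v1,v2,v3)"
    by (cases w; cases u; cases v) auto
  have h1: "w1*u1 + w2*u2 + w3*u3 = 0" and h2: "w1*v1 + w2*v2 + w3*v3 = 0"
    using assms by (auto simp: e dot3_def)
  have "cross w (cross u v) = (u1 * (w1*v1 + w2*v2 + w3*v3) - v1 * (w1*u1 + w2*u2 + w3*u3),
                              u2 * (w1*v1 + w2*v2 + w3*v3) - v2 * (w1*u1 + w2*u2 + w3*u3),
                              u3 * (w1*v1 + w2*v2 + w3*v3) - v3 * (w1*u1 + w2*u2 + w3*u3))"
    by (simp add: e cross_def algebra_simps)
  then show ?thesis using h1 h2 by simp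
qed

lemma unique_line:
  fixes P Q :: "('a::field \<times> 'a \<times> 'a) set"
  assumes P: "P \<in> P2" and Q: "Q \<in> P2" and PQ: "P \<noteq> Q"
  shows "\<exists>l0. {l \<in> P2. incident P l \<and> incident Q l} = {l0}"
proof -
  obtain u v where u: "u \<in> P" and v: "v \<in> Q" using P2_nonempty P Q by blast
  have unz: "u \<noteq> (0,0,0)" and vnz: "v \<noteq> (0,0,0)" using P2_nonzero P Q u v by blast+
  define k where "k = cross u v"
  have knz: "k \<noteq> (0,0,0)"
  proof
    assume "k = (0,0,0)"
    then obtain c where c: "u = smul c v" using cross_zero_prop vnz unfolding k_def by blast
    then have "c \<noteq> 0" using unz by (auto simp: smul_def)
    then have "u \<in> proj_class v" unfolding proj_class_smul using c by blast
    then have "u \<in> Q" using P2_mem_eq[OF Q v] by simp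
    then show False using PQ P2_mem_eq[OF P u] P2_mem_eq[OF Q] by metis
  qed
  define l0 where "l0 = proj_class k"
  have l0: "l0 \<in> P2" unfolding l0_def P2_def using knz by blast
  have k0: "k \<in> l0" unfolding l0_def by (rule self_in_proj_class)
  show ?thesis
  proof (intro exI set_eqI iffI)
    fix l assume "l \<in> {l \<in> P2. incident P l \<and> incident Q l}"
    then have l: "l \<in> P2" "incident P l" "incident Q l" by auto
    obtain w where w: "w \<in> l" using P2_nonempty l(1) by blast
    have "dot3 u w = 0" "dot3 v w = 0"
      using incident_iff[OF P l(1) u w] incident_iff[OF Q l(1) v w] l by auto
    then have "cross w k = (0,0,0)" unfolding k_def by (intro bac_cab) (simp_all add: dot3_comm)
    then obtain c where c: "w = smul c k" using cross_zero_prop knz by blast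
    have "w \<noteq> (0,0,0)" using P2_nonzero l(1) w by blast
    then have "c \<noteq> 0" using c by (auto simp: smul_def)
    then have "w \<in> l0" unfolding l0_def proj_class_smul using c by blast
    then show "l \<in> {l0}" using P2_mem_eq[OF l(1) w] P2_mem_eq[OF l0] by simp
  next
    fix l assume "l \<in> {l0}"
    then have "l = l0" by simp
    moreover have "incident P l0" "incident Q l0"
      using incident_iff[OF P l0 u k0] incident_iff[OF Q l0 v k0] dot_cross1[of u v] dot_cross2[of v u]
      unfolding k_def by auto
    ultimately show "l \<in> {l \<in> P2. incident P l \<and> incident Q l}" using l0 by simp
  qed
qed

lemma double_count:
  assumes "finite A" "finite B"
  shows "(\<Sum>a\<in>A. card {b\<in>B. R a b}) = (\<Sum>b\<in>B. card {a\<in>A. R a b})"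
proof -
  have "(\<Sum>a\<in>A. card {b\<in>B. R a b}) = (\<Sum>a\<in>A. \<Sum>b\<in>B. if R a b then 1 else 0)"
    using assms by (simp add: sum.inter_filter[symmetric])
  also have "\<dots> = (\<Sum>b\<in>B. \<Sum>a\<in>A. if R a b then 1 else 0)" by (rule sum.swap)
  also have "\<dots> = (\<Sum>b\<in>B. card {a\<in>A. R a b})"
    using assms by (simp add: sum.inter_filter[symmetric])
  finally show ?thesis .
qed

lemma local_count:
  fixes F :: "'a::{finite,field} tpoly"
  assumes P: "P \<in> rat_points F"
  shows "(\<Sum>l\<in>{l \<in> P2. incident P l}. line_count F l) = card (rat_points F) + CARD('a)"
proof -
  define X where "X = rat_points F"
  define LP where "LP = {l \<in> P2. incident P l}"
  have XP2: "X \<subseteq> P2" unfolding rat_points_def X_def by auto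
  have finX: "finite X" using finite_subset[OF XP2 finite_P2] .
  have finLP: "finite LP" unfolding LP_def using finite_P2 by simp
  have PX: "P \<in> X" using P X_def by simp
  have PP2: "P \<in> P2" using PX XP2 by auto
  have s1: "(\<Sum>l\<in>LP. line_count F l) = (\<Sum>l\<in>LP. card {Q\<in>X. incident Q l})"
    unfolding line_count_def X_def by simp
  have s2: "(\<Sum>l\<in>LP. card {Q\<in>X. incident Q l}) = (\<Sum>Q\<in>X. card {l\<in>LP. incident Q l})"
    by (rule double_count[OF finLP finX])
  have s3: "(\<Sum>Q\<in>X. card {l\<in>LP. incident Q l}) = card {l\<in>LP. incident P l} + (\<Sum>Q\<in>X - {P}. card {l\<in>LP. incident Q l})"
    using finX PX by (rule sum.remove)
  have s4: "(\<Sum>Q\<in>X - {P}. card {l\<in>LP. incident Q l}) = (\<Sum>Q\<in>X - {P}. 1)"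
  proof (rule sum.cong[OF refl])
    fix Q assume Q: "Q \<in> X - {P}"
    then have QP2: "Q \<in> P2" and PQ: "P \<noteq> Q" using XP2 by auto
    obtain l0 where "{l \<in> P2. incident P l \<and> incident Q l} = {l0}"
      using unique_line[OF PP2 QP2 PQ] by (elim exE)
    moreover have "{l\<in>LP. incident Q l} = {l \<in> P2. incident P l \<and> incident Q l}"
      unfolding LP_def by blast
    ultimately show "card {l\<in>LP. incident Q l} = 1" by simp
  qed
  have s5: "{l\<in>LP. incident P l} = LP" by (simp add: LP_def)
  have s6: "card LP = CARD('a) + 1" unfolding LP_def using card_lines_through[OF PP2] .
  have s56: "card {l\<in>LP. incident P l} = CARD('a) + 1" using s5 s6 by simp
  have s7: "(\<Sum>Q\<in>X - {P}. (1::nat)) = card X - 1" using finX PX by simp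
  have "card X \<ge> 1" using finX PX by (metis One_nat_def Suc_leI card_gt_0_iff empty_iff)
  then show ?thesis using s1 s2 s3 s4 s56 s7 unfolding LP_def[symmetric] X_def[symmetric] by linarith
qed


lemma point_lemma:
  fixes F :: "'a::{finite,field} tpoly"
  assumes P: "P \<in> rat_points F"
    and lb: "\<forall>l\<in>P2. line_count F l \<le> CARD('a) - 1"
    and N: "card (rat_points F) = (CARD('a) - 1)^2"
    and q5: "CARD('a) \<ge> 5"
  shows "card {l \<in> P2. incident P l \<and> line_count F l = CARD('a) - 1} \<ge> 3 \<and>
     (card {l \<in> P2. incident P l \<and> line_count F l = CARD('a) - 1} = 3 \<longrightarrow>
       (\<forall>l\<in>{l \<in> P2. incident P l \<and> line_count F l \<noteq> CARD('a) - 1}. line_count F l = CARD('a) - 2) \<and>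
       card {l \<in> P2. incident P l \<and> line_count F l \<noteq> CARD('a) - 1} = CARD('a) - 2)"
proof -
  define q where "q = CARD('a)"
  obtain p where p: "q = p + 2" using q5 unfolding q_def by (metis add.commute le_Suc_ex le_trans numeral_le_iff semiring_norm(68) semiring_norm(72) nat_le_iff_add)
  define T where "T = {l \<in> P2. incident P l \<and> line_count F l = q - 1}"
  define U where "U = {l \<in> P2. incident P l \<and> line_count F l \<noteq> q - 1}"
  define LP where "LP = {l \<in> P2. incident P l}"
  have finT: "finite T" and finU: "finite U" and finLP: "finite LP"
    unfolding T_def U_def LP_def using finite_P2 by simp_all
  have LPTU: "LP = T \<union> U" and disj: "T \<inter> U = {}" unfolding LP_def T_def U_def by blast+
  have cLP: "card LP = p + 3" unfolding LP_def using card_lines_through[of P] P p q_def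
    unfolding rat_points_def by simp
  have ctu: "card T + card U = p + 3" using cLP LPTU disj finT finU card_Un_disjoint by metis
  have sLP: "(\<Sum>l\<in>LP. line_count F l) = (p+1)*(p+1) + (p + 2)"
    using local_count[OF P] N p unfolding LP_def q_def[symmetric] by (simp add: power2_eq_square)
  have sLP2: "(\<Sum>l\<in>LP. line_count F l) = (\<Sum>l\<in>T. line_count F l) + (\<Sum>l\<in>U. line_count F l)"
    unfolding LPTU using finT finU disj by (rule sum.union_disjoint)
  have sT: "(\<Sum>l\<in>T. line_count F l) = card T * (p + 1)"
  proof -
    have "(\<Sum>l\<in>T. line_count F l) = (\<Sum>l\<in>T. p + 1)"
      by (rule sum.cong) (auto simp: T_def p)
    then show ?thesis by simp
  qed
  have Ule: "line_count F l \<le> p" if "l \<in> U" for l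
    using that lb p unfolding U_def q_def by fastforce
  have sU: "(\<Sum>l\<in>U. line_count F l) \<le> card U * p"
    using sum_bounded_above[of U "line_count F" p] Ule by simp
  have e1: "card T * (p+1) + card U * p + card U = (card T + card U) * (p + 1)"
    by (simp add: algebra_simps)
  have e2: "(p + 3) * (p + 1) = p*p + 4*p + 3" by (simp add: algebra_simps)
  have e3: "(p+1)*(p+1) = p*p + 2*p + 1" by (simp add: algebra_simps)
  have e1': "card T * (p+1) + card U * p + card U = p*p + 4*p + 3" using e1 ctu e2 by simp
  have uP: "card U \<le> p" using sLP sLP2 sT sU e1' e3 by linarith
  have t3: "card T \<ge> 3" using uP ctu by linarith
  moreover have "card T = 3 \<longrightarrow> (\<forall>l\<in>U. line_count F l = q - 2) \<and> card U = q - 2"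
  proof
    assume "card T = 3"
    then have cu: "card U = p" using ctu by simp
    have sUe: "(\<Sum>l\<in>U. line_count F l) = p * p"
    proof -
      have "card T * (p+1) = 3*p+3" using \<open>card T = 3\<close> by simp
      then show ?thesis using sLP sLP2 sT e3 by linarith
    qed
    have "\<forall>l\<in>U. line_count F l = p"
    proof (rule ccontr)
      assume "\<not> (\<forall>l\<in>U. line_count F l = p)"
      then obtain l0 where l0: "l0 \<in> U" "line_count F l0 \<noteq> p" by blast
      then have "line_count F l0 < p" using Ule[OF l0(1)] by linarith
      then have "(\<Sum>l\<in>U. line_count F l) < (\<Sum>l\<in>U. p)"
        using sum_strict_mono_ex1[OF finU, of "line_count F" "\<lambda>_. p"] Ule l0(1) by blast
      then show False using sUe cu by simp
    qed
    then show "(\<forall>l\<in>U. line_count F l = q - 2) \<and> card U = q - 2" using cu p by simp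
  qed
  ultimately show ?thesis unfolding q_def[symmetric] T_def[symmetric] U_def[symmetric] by blast
qed


theorem lemma3p7:
  fixes F :: "'a::{finite, field} tpoly"
  defines "q \<equiv> CARD('a)"
  assumes q5: "q \<ge> 5"
    and deg: "homogeneous_of_degree (q - 1) F"
    and nolin: "no_linear_components F"
    and npts: "Nq F = (q - 1)^2"
  shows "(\<forall>P\<in>rat_points F. psi F (q - 1) P \<ge> 3)
       \<and> a_count F (q - 1) \<ge> 3 * (q - 1)
       \<and> (\<forall>P\<in>rat_points F. psi F (q - 1) P = 3 \<longrightarrow>
             card {l \<in> P2. incident P l \<and> line_count F l = q - 1} = 3
           \<and> card {l \<in> P2. incident P l \<and> line_count F l = q - 2} = q - 2
           \<and> (\<forall>l\<in>P2. incident P l \<longrightarrow> line_count F l = q - 1 \<or> line_count F l = q - 2))"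
proof -
  have lb: "\<forall>l\<in>P2. line_count F l \<le> CARD('a) - 1"
    using line_bound[OF deg nolin] unfolding q_def by blast
  have N: "card (rat_points F) = (CARD('a) - 1)^2" using npts unfolding Nq_def q_def .
  have q5': "CARD('a) \<ge> 5" using q5 unfolding q_def .
  have pl: "card {l \<in> P2. incident P l \<and> line_count F l = q - 1} \<ge> 3 \<and>
     (card {l \<in> P2. incident P l \<and> line_count F l = q - 1} = 3 \<longrightarrow>
       (\<forall>l\<in>{l \<in> P2. incident P l \<and> line_count F l \<noteq> q - 1}. line_count F l = q - 2) \<and>
       card {l \<in> P2. incident P l \<and> line_count F l \<noteq> q - 1} = q - 2)"
    if "P \<in> rat_points F" for P
    using point_lemma[OF that lb N q5'] unfolding q_def by blast
  have psi_eq: "psi F (q - 1) P = card {l \<in> P2. incident P l \<and> line_count F l = q - 1}" for P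
  proof -
    have "{l \<in> lines_A F (q - 1). incident P l} = {l \<in> P2. incident P l \<and> line_count F l = q - 1}"
      unfolding lines_A_def by blast
    then show ?thesis unfolding psi_def by simp
  qed
  have A1: "\<forall>P\<in>rat_points F. psi F (q - 1) P \<ge> 3" using pl psi_eq by simp
  define X where "X = rat_points F"
  define A where "A = lines_A F (q - 1)"
  have XP2: "X \<subseteq> P2" unfolding rat_points_def X_def by auto
  have finX: "finite X" using finite_subset[OF XP2 finite_P2] .
  have finA: "finite A" unfolding A_def lines_A_def using finite_P2 by simp
  have "(\<Sum>P\<in>X. psi F (q - 1) P) = (\<Sum>P\<in>X. card {l\<in>A. incident P l})"
    unfolding psi_def A_def by simp
  also have "\<dots> = (\<Sum>l\<in>A. card {P\<in>X. incident P l})"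
    by (rule double_count[OF finX finA])
  also have "\<dots> = (\<Sum>l\<in>A. q - 1)"
    by (rule sum.cong) (auto simp: A_def lines_A_def line_count_def X_def)
  also have "\<dots> = card A * (q - 1)" by simp
  finally have sA: "(\<Sum>P\<in>X. psi F (q - 1) P) = card A * (q - 1)" .
  have "(\<Sum>P\<in>X. (3::nat)) \<le> (\<Sum>P\<in>X. psi F (q - 1) P)"
    by (rule sum_mono) (use A1 X_def in blast)
  then have "card X * 3 \<le> card A * (q - 1)" using sA by simp
  moreover have "card X = (q - 1) * (q - 1)" using N unfolding X_def q_def by (simp add: power2_eq_square)
  ultimately have "(3 * (q - 1)) * (q - 1) \<le> card A * (q - 1)" by (simp add: mult_ac)
  moreover have "q - 1 > 0" using q5 by simp
  ultimately have A2: "a_count F (q - 1) \<ge> 3 * (q - 1)"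
    unfolding a_count_def A_def[symmetric] using mult_le_cancel2 by blast
  have A3: "card {l \<in> P2. incident P l \<and> line_count F l = q - 1} = 3
           \<and> card {l \<in> P2. incident P l \<and> line_count F l = q - 2} = q - 2
           \<and> (\<forall>l\<in>P2. incident P l \<longrightarrow> line_count F l = q - 1 \<or> line_count F l = q - 2)"
    if P: "P \<in> rat_points F" and ps: "psi F (q - 1) P = 3" for P
  proof -
    have T3: "card {l \<in> P2. incident P l \<and> line_count F l = q - 1} = 3" using ps psi_eq by simp
    then have U: "\<forall>l\<in>{l \<in> P2. incident P l \<and> line_count F l \<noteq> q - 1}. line_count F l = q - 2"
      and cU: "card {l \<in> P2. incident P l \<and> line_count F l \<noteq> q - 1} = q - 2"
      using pl[OF P] by blast+
    have ne: "q - 2 \<noteq> q - 1" using q5 by simp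
    have "{l \<in> P2. incident P l \<and> line_count F l = q - 2} = {l \<in> P2. incident P l \<and> line_count F l \<noteq> q - 1}"
    proof (intro set_eqI iffI)
      fix l assume "l \<in> {l \<in> P2. incident P l \<and> line_count F l = q - 2}"
      then show "l \<in> {l \<in> P2. incident P l \<and> line_count F l \<noteq> q - 1}" using ne by (metis (mono_tags, lifting) mem_Collect_eq)
    next
      fix l assume "l \<in> {l \<in> P2. incident P l \<and> line_count F l \<noteq> q - 1}"
      then show "l \<in> {l \<in> P2. incident P l \<and> line_count F l = q - 2}" using U by (metis (mono_tags, lifting) mem_Collect_eq)
    qed
    then show ?thesis using T3 cU U by (metis (mono_tags, lifting) mem_Collect_eq)
  qed
  show ?thesis using A1 A2 A3 by blast
qed

end
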